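(* For every $f\in\mathfrak N_0$, $(h\hat S-\hat Sh)f=-if$, and for every $f\in\mathfrak N_1$, $(h\hat S^*-\hat S^*h)f=-if$.
   Context: Work in $L^2(\mathbb{R})$; $q$ is multiplication by $x$, $p=-i\,d/dx$, $h=\frac12(p^2+q^2)$ on $D(p^2)\cap D(q^2)$. Let $\mathbb{H}=\{z:\operatorname{Im}z>0\}$, $\xi_z(x)=e^{izx^2/2}$, $\mathscr{C}(z)=\frac{z-i}{z+i}$, $\log w=\log|w|+i\arg w$ with $-\pi\le\arg w<\pi$. For $z\in\mathbb H\setminus\{i\}$ set $L_0(z)=\log(-\mathscr C(z))$ and $L_k(z)=\frac{d^{k-1}}{dz^{k-1}}\frac{2i}{1+z^2}$ for $k\ge1$. For $n\ge0$ let $[t_z^nL](x,z)=\sum_{k=0}^n\binom nkx^{2(n-k)}(-2i)^kL_k(z)$ (i.e. $(x^2-2i\,\frac{d}{dz})^n$ applied to $\log(-\mathscr C(z))$), and for a polynomial $\rho(s)=\sum c_ns^n$ let $[\rho(t_z)L]=\sum c_n[t^n_zL]$. $\mathfrak N_0$ is the span of $\{\rho(x^2)\xi_z:\rho$ polynomial, $z\in\mathbb H\setminus\{i\}\}$ and $\mathfrak N_1$ the span of $\{\rho(x^2)x\xi_z\}$ (same ranges). The linear operators $\hat S$ on $\mathfrak N_0$ and $\hat S^*$ on $\mathfrak N_1$ (notation only) are defined by $\hat S(\rho(x^2)\xi_z)=\frac i2[\rho(t_z)L](x,z)\xi_z$ and $\hat S^*(\rho(x^2)x\xi_z)=\frac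 i2[\rho(t_z)L](x,z)x\xi_z$, extended linearly. *)

theory Defs
  imports "HOL-Analysis.Analysis" "HOL-Computational_Algebra.Polynomial"
begin

text \<open>Functions on the real line are represented as maps real \<Rightarrow> complex
  (smooth representatives of the L2 classes).\<close>

definition hop :: "(real \<Rightarrow> complex) \<Rightarrow> real \<Rightarrow> complex" where
  "hop f x = (1/2) * (- vector_derivative (\<lambda>y. vector_derivative f (at y)) (at x)
                     + complex_of_real (x^2) * f x)"

definition xi :: "complex \<Rightarrow> real \<Rightarrow> complex" where
  "xi z x = exp (\<i> * z * complex_of_real (x^2) / 2)"

definition cayley :: "complex \<Rightarrow> complex" where
  "cayley z = (z - \<i>) / (z + \<i>)"

text \<open>Logarithm with argument in [-pi, pi) (Isabelle's Ln uses (-pi, pi]).\<close>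
definition logm :: "complex \<Rightarrow> complex" where
  "logm w = complex_of_real (ln (cmod w))
            + \<i> * complex_of_real (if Arg w = pi then - pi else Arg w)"

definition Lk :: "nat \<Rightarrow> complex \<Rightarrow> complex" where
  "Lk k z = (if k = 0 then logm (- cayley z)
             else (deriv ^^ (k - 1)) (\<lambda>w. 2 * \<i> / (1 + w^2)) z)"

definition tnL :: "nat \<Rightarrow> real \<Rightarrow> complex \<Rightarrow> complex" where
  "tnL n x z = (\<Sum>k\<le>n. of_nat (n choose k) * complex_of_real (x ^ (2 * (n - k)))
                         * (- 2 * \<i>) ^ k * Lk k z)"

definition rhoL :: "complex poly \<Rightarrow> real \<Rightarrow> complex \<Rightarrow> complex" where
  "rhoL \<rho> x z = (\<Sum>n\<le>degree \<rho>. coeff \<rho> n * tnL n x z)"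

definition adm :: "complex \<Rightarrow> bool" where
  "adm z \<longleftrightarrow> Im z > 0 \<and> z \<noteq> \<i>"

text \<open>Finite linear combinations of generators, as lists of (coefficient, rho, z).\<close>
definition valid_rep :: "(complex \<times> complex poly \<times> complex) list \<Rightarrow> bool" where
  "valid_rep r \<longleftrightarrow> (\<forall>(c, \<rho>, z) \<in> set r. adm z)"

definition eval0 :: "(complex \<times> complex poly \<times> complex) list \<Rightarrow> real \<Rightarrow> complex" where
  "eval0 r x = (\<Sum>(c, \<rho>, z) \<leftarrow> r. c * poly \<rho> (complex_of_real (x^2)) * xi z x)"

definition eval1 :: "(complex \<times> complex poly \<times> complex) list \<Rightarrow> real \<Rightarrow> complex" where
  "eval1 r x = (\<Sum>(c, \<rho>, z) \<leftarrow> r.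
                  c * poly \<rho> (complex_of_real (x^2)) * complex_of_real x * xi z x)"

definition Seval0 :: "(complex \<times> complex poly \<times> complex) list \<Rightarrow> real \<Rightarrow> complex" where
  "Seval0 r x = (\<Sum>(c, \<rho>, z) \<leftarrow> r. c * (\<i> / 2) * rhoL \<rho> x z * xi z x)"

definition Seval1 :: "(complex \<times> complex poly \<times> complex) list \<Rightarrow> real \<Rightarrow> complex" where
  "Seval1 r x = (\<Sum>(c, \<rho>, z) \<leftarrow> r.
                   c * (\<i> / 2) * rhoL \<rho> x z * complex_of_real x * xi z x)"

definition N0 :: "(real \<Rightarrow> complex) set" where
  "N0 = {f. \<exists>r. valid_rep r \<and> f = eval0 r}"

definition N1 :: "(real \<Rightarrow> complex) set" where
  "N1 = {f. \<exists>r. valid_rep r \<and> f = eval1 r}"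

text \<open>Linear extensions of S-hat and S-hat-star (the value on f, determined by any representation).\<close>
definition Shat :: "(real \<Rightarrow> complex) \<Rightarrow> real \<Rightarrow> complex" where
  "Shat f = (THE g. \<exists>r. valid_rep r \<and> f = eval0 r \<and> g = Seval0 r)"

definition Shat_star :: "(real \<Rightarrow> complex) \<Rightarrow> real \<Rightarrow> complex" where
  "Shat_star f = (THE g. \<exists>r. valid_rep r \<and> f = eval1 r \<and> g = Seval1 r)"

end

theory Submission
  imports Defs "HOL-Complex_Analysis.Complex_Analysis"
begin

definition ff :: "complex \<Rightarrow> complex" where "ff w = 2 * \<i> / (1 + w^2)"

lemma deriv_quad: "(deriv ^^ i) (\<lambda>w::complex. 1 + w^2) z =
   (if i = 0 then 1 + z^2 else if i = 1 then 2*z else if i = 2 then 2 else 0)"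
proof -
  have d1: "deriv (\<lambda>w::complex. 1 + w^2) = (\<lambda>w. 2*w)"
    by (rule ext, rule DERIV_imp_deriv) (auto intro!: derivative_eq_intros)
  have d2: "deriv (\<lambda>w::complex. 2*w) = (\<lambda>w. 2)"
    by (rule ext, rule DERIV_imp_deriv) (auto intro!: derivative_eq_intros)
  have d3: "deriv (\<lambda>w::complex. 2) = (\<lambda>w. 0)"
    by (rule ext, rule DERIV_imp_deriv) (auto intro!: derivative_eq_intros)
  show ?thesis
  proof (cases i)
    case 0 then show ?thesis by simp
  next
    case (Suc j) note j = this
    show ?thesis
    proof (cases j)
      case 0 then show ?thesis using j d1 by simp
    next
      case (Suc k) note k = this
      show ?thesis
      proof (cases k)
        case 0 then show ?thesis using j k d1 d2 by (simp add: numeral_2_eq_2)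
      next
        case (Suc l)
        then show ?thesis using j k d1 d2 d3
          by (simp add: funpow_Suc_right del: funpow.simps)
      qed
    qed
  qed
qed

lemma ff_holo: "ff holomorphic_on (- {\<i>, - \<i>})"
proof -
  have "1 + w^2 \<noteq> 0" if "w \<in> - {\<i>, - \<i>}" for w :: complex
  proof
    assume "1 + w^2 = 0"
    then have "(w - \<i>) * (w + \<i>) = 0" by (simp add: algebra_simps power2_eq_square)
    then show False using that by (auto simp: add_eq_0_iff2)
  qed
  then show ?thesis unfolding ff_def by (auto intro!: holomorphic_intros)
qed

lemma ff_rel:
  assumes z: "z \<noteq> \<i>" "z \<noteq> - \<i>"
  shows "(1 + z^2) * (deriv ^^ m) ff z
         + of_nat m * (2*z) * (deriv ^^ (m - 1)) ff z
         + of_nat (m choose 2) * 2 * (deriv ^^ (m - 2)) ff z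
         = (if m = 0 then 2 * \<i> else 0)"
proof -
  define S where "S = - {\<i>, - \<i>::complex}"
  have oS: "open S" unfolding S_def by auto
  have zS: "z \<in> S" using z unfolding S_def by auto
  have eqS: "\<And>w. w \<in> S \<Longrightarrow> (1 + w^2) * ff w = 2 * \<i>"
  proof -
    fix w assume "w \<in> S"
    have "1 + w^2 \<noteq> 0"
    proof
      assume "1 + w^2 = 0"
      then have "(w - \<i>) * (w + \<i>) = 0" by (simp add: algebra_simps power2_eq_square)
      then show False using \<open>w \<in> S\<close> unfolding S_def by (auto simp: add_eq_0_iff2)
    qed
    then show "(1 + w^2) * ff w = 2 * \<i>" unfolding ff_def by simp
  qed
  have ev: "eventually (\<lambda>w. (1 + w^2) * ff w = 2 * \<i>) (nhds z)"
    using eventually_nhds_in_open[OF oS zS] by (rule eventually_mono) (use eqS in auto)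
  have "(deriv ^^ m) (\<lambda>w. (1 + w^2) * ff w) z = (deriv ^^ m) (\<lambda>w. 2 * \<i>) z"
    by (rule higher_deriv_cong_ev[OF ev refl])
  also have "\<dots> = (if m = 0 then 2 * \<i> else 0)" by simp
  finally have A: "(deriv ^^ m) (\<lambda>w. (1 + w^2) * ff w) z = (if m = 0 then 2 * \<i> else 0)" .
  have B: "(deriv ^^ m) (\<lambda>w. (1 + w^2) * ff w) z =
        (\<Sum>i = 0..m. of_nat (m choose i) * (deriv ^^ i) (\<lambda>w. 1 + w^2) z * (deriv ^^ (m-i)) ff z)"
    by (rule higher_deriv_mult[OF _ ff_holo[folded S_def] oS zS]) (auto intro!: holomorphic_intros)
  have C: "(\<Sum>i = 0..m. of_nat (m choose i) * (deriv ^^ i) (\<lambda>w. 1 + w^2) z * (deriv ^^ (m-i)) ff z)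
     = (1 + z^2) * (deriv ^^ m) ff z
         + of_nat m * (2*z) * (deriv ^^ (m - 1)) ff z
         + of_nat (m choose 2) * 2 * (deriv ^^ (m - 2)) ff z"
  proof (cases "m \<ge> 2")
    case True
    have "(\<Sum>i = 0..m. of_nat (m choose i) * (deriv ^^ i) (\<lambda>w. 1 + w^2) z * (deriv ^^ (m-i)) ff z)
       = (\<Sum>i \<in> {0,1,2}. of_nat (m choose i) * (deriv ^^ i) (\<lambda>w. 1 + w^2) z * (deriv ^^ (m-i)) ff z)"
      by (rule sum.mono_neutral_right) (use True in \<open>auto simp: deriv_quad\<close>)
    then show ?thesis by (simp add: deriv_quad)
  next
    case False
    then have "m = 0 \<or> m = 1" by auto
    then show ?thesis by (auto simp: deriv_quad)
  qed
  show ?thesis using A B C by simp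
qed

definition tc :: "(nat \<Rightarrow> complex) \<Rightarrow> nat \<Rightarrow> nat \<Rightarrow> complex" where
  "tc L n e = (if e \<le> n then of_nat (n choose (n - e)) * (- 2 * \<i>) ^ (n - e) * L (n - e) else 0)"

definition csig :: "complex \<Rightarrow> complex \<Rightarrow> (nat \<Rightarrow> complex) \<Rightarrow> nat \<Rightarrow> complex" where
  "csig \<alpha> z p e = (1/2) * (- 2 * of_nat (e+1) * (2 * of_nat e + \<alpha>) * p (e+1)
      - \<i> * z * (4 * of_nat e + \<alpha>) * p e + (1 + z^2) * (if e = 0 then 0 else p (e - 1)))"

lemma binom_b: "(e+1) * ((e+i+1) choose i) = (i+1) * ((e+i+1) choose (i+1))"
  by (metis Suc_eq_plus1 add.commute add_Suc_right binomial_absorb_comp binomial_symmetric  le_add2 add_diff_cancel_left' Suc_times_binomial_add)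

lemma binom_c: "(e+i+1) * ((e+i) choose i) = (i+1) * ((e+i+1) choose (i+1))"
  using Suc_eq_plus1 Suc_times_binomial by presburger

lemma binom_a: "((e+i+2) choose (i+2)) = ((e+i+1) choose (i+1)) + ((e+i+1) choose (i+2))"
  using binomial_Suc_Suc[of "e+i+1" "i+1"] by (simp add: numeral_2_eq_2)

lemma key_alg:
  fixes X Y P Q d z \<alpha> L0 L1 L2 :: complex and e i :: nat
  assumes P: "(of_nat e + 1) * P = (of_nat i + 1) * X"
  and Q: "(of_nat e + of_nat i + 1) * Q = (of_nat i + 1) * X"
  and R: "(1 + z^2) * L2 + 2 * (of_nat i + 1) * z * L1 + (of_nat i + 1) * of_nat i * L0 = 0"
  shows "(1/2) * (- 2 * (of_nat e + 1) * (2 * of_nat e + \<alpha>) * (P * d * L0)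
      - \<i> * z * (4 * of_nat e + \<alpha>) * (X * (d * (- 2 * \<i>)) * L1) + (1 + z^2) * (Y * (d * (- 2 * \<i>) * (- 2 * \<i>)) * L2))
     - (1/2) * (- 2 * (of_nat e + of_nat i + 1) * (2 * (of_nat e + of_nat i + 1) - 2 + \<alpha>) * (Q * d * L0)
          - \<i> * z * (4 * (of_nat e + of_nat i + 1) + \<alpha>) * (X * (d * (- 2 * \<i>)) * L1) + (1 + z^2) * ((X + Y) * (d * (- 2 * \<i>) * (- 2 * \<i>)) * L2))
     = 0" (is "?G = 0")
proof -
  have ii: "\<i> * \<i> = (-1::complex)" by simp
  have "?G = 2 * X * d * ((1 + z^2) * L2 + 2 * (of_nat i + 1) * z * L1 + (of_nat i + 1) * of_nat i * L0)"
    using P Q ii by algebra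
  then show ?thesis using R by simp
qed

lemma comm_coeff:
  fixes L :: "nat \<Rightarrow> complex"
  assumes L1: "(1 + z^2) * L 1 = 2 * \<i>"
    and R: "\<And>j. j \<ge> 1 \<Longrightarrow> (1 + z^2) * L (j+1) + 2 * of_nat j * z * L j + of_nat j * (of_nat j - 1) * L (j - 1) = 0"
  shows "csig \<alpha> z (tc L n) e
     - (1/2) * (- 2 * of_nat n * (2 * of_nat n - 2 + \<alpha>) * tc L (n-1) e
          - \<i> * z * (4 * of_nat n + \<alpha>) * tc L n e + (1 + z^2) * tc L (n+1) e)
     = (if e = n then -2 else 0)"
proof -
  consider "e > n + 1" | "e = n + 1" | "e = n" | i where "n = e + Suc i"
    by (metis add_Suc_right less_imp_Suc_add linorder_neqE_nat Suc_eq_plus1 less_SucE)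
  then show ?thesis
  proof cases
    case 1 then show ?thesis by (auto simp: csig_def tc_def)
  next
    case 2 then show ?thesis by (simp add: csig_def tc_def)
  next
    case 3
    show ?thesis
    proof (cases n)
      case 0 then show ?thesis unfolding 3 0 using L1 apply (simp add: csig_def tc_def)
        using i_squared by algebra
    next
      case (Suc m)
      have "(1 + z^2) * (of_nat n * (-2*\<i>) * L 1) - (1 + z^2) * (of_nat (n+1) * (-2*\<i>) * L 1) = 
         (-2 * \<i>) * (- ((1 + z^2) * L 1))"
        by (simp add: algebra_simps)
      also have "\<dots> = -4" using L1 by simp
      finally have X: "(1 + z^2) * (of_nat n * (-2*\<i>) * L 1) - (1 + z^2) * (of_nat (n+1) * (-2*\<i>) * L 1) = -4" .
      show ?thesis using 3 Suc X by (simp add: csig_def tc_def algebra_simps)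
    qed
  next
    case 4
    define D where "D = - 2 * \<i>"
    have t1: "tc L n (e+1) = of_nat (n choose i) * D^i * L i"
      unfolding tc_def D_def using 4 by simp
    have t2: "tc L n e = of_nat (n choose (i+1)) * (D^i * D) * L (i+1)"
      unfolding tc_def D_def using 4 by simp
    have t3: "(if e = 0 then 0 else tc L n (e - 1)) = of_nat (n choose (i+2)) * (D^i * D * D) * L (i+2)"
    proof (cases e)
      case 0 then show ?thesis using 4 by (simp add: binomial_eq_0 del: binomial_Suc_Suc)
    next
      case (Suc e') then show ?thesis unfolding tc_def D_def using 4
        by (simp add: numeral_2_eq_2 )
    qed
    have t4: "tc L (n-1) e = of_nat ((e+i) choose i) * D^i * L i"
      unfolding tc_def D_def using 4 by simp
    have t5: "tc L (n+1) e = of_nat ((n+1) choose (i+2)) * (D^i * D * D) * L (i+2)"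
      unfolding tc_def D_def using 4 by (simp add: numeral_2_eq_2)
    have h1: "(e+1) * (n choose i) = (i+1) * (n choose (i+1))"
      using binom_b[of e i] 4 by (simp del: binomial_Suc_Suc)
    have h2: "(e+i+1) * ((e+i) choose i) = (i+1) * (n choose (i+1))"
      using binom_c[of e i] 4 by (simp del: binomial_Suc_Suc)
    have h3: "((n+1) choose (i+2)) = (n choose (i+1)) + (n choose (i+2))"
      using binom_a[of e i] 4 by (simp del: binomial_Suc_Suc)
    have b1: "(of_nat e + 1) * (of_nat (n choose i) :: complex) = (of_nat i + 1) * of_nat (n choose (i+1))"
      using arg_cong[OF h1, of "of_nat :: nat \<Rightarrow> complex"] by (simp only: of_nat_mult of_nat_add of_nat_1)
    have b2: "(of_nat e + of_nat i + 1) * (of_nat ((e+i) choose i) :: complex) = (of_nat i + 1) * of_nat (n choose (i+1))"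
      using arg_cong[OF h2, of "of_nat :: nat \<Rightarrow> complex"] by (simp only: of_nat_mult of_nat_add of_nat_1)
    have b3: "(of_nat ((n+1) choose (i+2)) :: complex) = of_nat (n choose (i+1)) + of_nat (n choose (i+2))"
      using arg_cong[OF h3, of "of_nat :: nat \<Rightarrow> complex"] by (simp only: of_nat_mult of_nat_add of_nat_1)
    have r: "(1 + z^2) * L (i+2) + 2 * (of_nat i + 1) * z * L (i+1) + (of_nat i + 1) * of_nat i * L i = 0"
      using R[of "i+1"] by (simp add: numeral_2_eq_2 algebra_simps)
    note K = key_alg[OF b1 b2 r, of \<alpha> "D^i" "of_nat (n choose (i+2))"]
    show ?thesis using 4 K unfolding csig_def t1 t2 t3 t4 t5 b3 D_def
      by (simp add: algebra_simps)
  qed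
qed


definition Tpoly :: "(nat \<Rightarrow> complex) \<Rightarrow> nat \<Rightarrow> complex poly" where
  "Tpoly L n = (\<Sum>k\<le>n. monom (of_nat (n choose k) * (- 2 * \<i>) ^ k * L k) (n - k))"

definition Tz :: "(nat \<Rightarrow> complex) \<Rightarrow> complex poly \<Rightarrow> complex poly" where
  "Tz L \<rho> = (\<Sum>n\<le>degree \<rho>. smult (coeff \<rho> n) (Tpoly L n))"

definition sig :: "complex \<Rightarrow> complex \<Rightarrow> complex poly \<Rightarrow> complex poly" where
  "sig \<alpha> z p = smult (1/2) (- smult 4 (pCons 0 (pderiv (pderiv p))) - smult (2*\<alpha>) (pderiv p)
      - smult (4*\<i>*z) (pCons 0 (pderiv p)) - smult (\<alpha>*\<i>*z) p + smult (1+z^2) (pCons 0 p))"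

lemma coeff_Tpoly: "coeff (Tpoly L n) e = tc L n e"
proof -
  have "coeff (Tpoly L n) e = (\<Sum>k\<le>n. if n - k = e then of_nat (n choose k) * (- 2 * \<i>) ^ k * L k else 0)"
    unfolding Tpoly_def coeff_sum coeff_monom by simp
  also have "\<dots> = (\<Sum>k\<le>n. if k = n - e \<and> e \<le> n then of_nat (n choose k) * (- 2 * \<i>) ^ k * L k else 0)"
    by (rule sum.cong) auto
  also have "\<dots> = tc L n e"
    unfolding tc_def by (cases "e \<le> n") (simp_all add: sum.delta)
  finally show ?thesis .
qed

lemma coeff_Tpoly_fun: "coeff (Tpoly L n) = tc L n"
  by (rule ext) (rule coeff_Tpoly)

lemma coeff_sig: "coeff (sig \<alpha> z p) e = csig \<alpha> z (coeff p) e"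
proof (cases e)
  case 0 then show ?thesis by (simp add: sig_def csig_def coeff_pderiv algebra_simps)
next
  case (Suc m) then show ?thesis by (simp add: sig_def csig_def coeff_pderiv algebra_simps)
qed

lemma sig_add: "sig \<alpha> z (p + q) = sig \<alpha> z p + sig \<alpha> z q"
  by (rule poly_eqI) (simp add: coeff_sig csig_def algebra_simps add_divide_distrib)

lemma sig_smult: "sig \<alpha> z (smult c p) = smult c (sig \<alpha> z p)"
  by (rule poly_eqI) (simp add: coeff_sig csig_def algebra_simps)

lemma Tz_eq: "degree \<rho> \<le> N \<Longrightarrow> Tz L \<rho> = (\<Sum>n\<le>N. smult (coeff \<rho> n) (Tpoly L n))"
  unfolding Tz_def
  by (rule sum.mono_neutral_left) (auto simp: coeff_eq_0)

lemma Tz_add: "Tz L (p + q) = Tz L p + Tz L q"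
proof -
  define N where "N = max (degree p) (degree q)"
  have "degree (p + q) \<le> N" unfolding N_def by (rule degree_add_le) auto
  then show ?thesis
    using Tz_eq[of "p+q" N L] Tz_eq[of p N L] Tz_eq[of q N L]
    by (simp add: N_def smult_add_left sum.distrib)
qed

lemma smult_sum_r: "smult c (\<Sum>i\<in>S. f i) = (\<Sum>i\<in>S. smult c (f i))"
  by (induct S rule: infinite_finite_induct) (auto simp: smult_add_right)

lemma Tz_smult: "Tz L (smult c p) = smult c (Tz L p)"
  using Tz_eq[of "smult c p" "degree p" L] Tz_eq[of p "degree p" L]
  by (simp add: smult_sum_r degree_smult_le)

lemma Tz_monom: "Tz L (monom c n) = smult c (Tpoly L n)"
proof -
  have "Tz L (monom c n) = (\<Sum>m\<le>n. smult (coeff (monom c n) m) (Tpoly L m))"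
    by (rule Tz_eq) (simp add: degree_monom_le)
  also have "\<dots> = (\<Sum>m\<le>n. if m = n then smult c (Tpoly L n) else 0)"
    by (rule sum.cong) (auto simp: coeff_monom)
  also have "\<dots> = smult c (Tpoly L n)"
    by (simp add: sum.delta)
  finally show ?thesis .
qed

lemma sig_monom: "sig \<alpha> z (monom 1 n) = smult (1/2) (smult (- 2 * of_nat n * (2 * of_nat n - 2 + \<alpha>)) (monom 1 (n-1))
     + smult (- \<i> * z * (4 * of_nat n + \<alpha>)) (monom 1 n) + smult (1 + z^2) (monom 1 (n+1)))"
proof (rule poly_eqI)
  fix e
  show "coeff (sig \<alpha> z (monom 1 n)) e = coeff (smult (1/2) (smult (- 2 * of_nat n * (2 * of_nat n - 2 + \<alpha>)) (monom 1 (n-1))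
     + smult (- \<i> * z * (4 * of_nat n + \<alpha>)) (monom 1 n) + smult (1 + z^2) (monom 1 (n+1)))) e"
    unfolding coeff_sig csig_def coeff_smult coeff_add coeff_monom
  proof -
    consider "e + 1 = n" | "e = n" | "e = n + 1" | "e + 1 \<noteq> n \<and> e \<noteq> n \<and> e \<noteq> n + 1" by blast
    then show "1 / 2 * (- 2 * of_nat (e + 1) * (2 * of_nat e + \<alpha>) * (if n = e + 1 then 1 else 0) -
        \<i> * z * (4 * of_nat e + \<alpha>) * (if n = e then 1 else 0) +
        (1 + z\<^sup>2) * (if e = 0 then 0 else if n = e - 1 then 1 else 0)) =
    1 / 2 * (- 2 * of_nat n * (2 * of_nat n - 2 + \<alpha>) * (if n - 1 = e then 1 else 0) +
        - \<i> * z * (4 * of_nat n + \<alpha>) * (if n = e then 1 else 0) +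
        (1 + z\<^sup>2) * (if n + 1 = e then 1 else 0))"
    proof cases
      case 1 then have "n = e + 1" by simp
      then show ?thesis by (simp add: algebra_simps)
    next
      case 2 then show ?thesis by (cases n) (simp_all add: algebra_simps)
    next
      case 3 then show ?thesis by simp
    next
      case 4 then show ?thesis by (cases n) auto
    qed
  qed
qed


lemma Tz_zero: "Tz L 0 = 0" by (simp add: Tz_def)

lemma Tz_sum: "Tz L (\<Sum>i\<in>S. f i) = (\<Sum>i\<in>S. Tz L (f i))"
  by (induct S rule: infinite_finite_induct) (simp_all add: Tz_add Tz_zero)

lemma sig_sum: "sig \<alpha> z (\<Sum>i\<in>S. f i) = (\<Sum>i\<in>S. sig \<alpha> z (f i))"
proof (induct S rule: infinite_finite_induct)
  case (empty)
  have "sig \<alpha> z 0 = 0" using sig_smult[of \<alpha> z 0 0] by simp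
  then show ?case by simp
qed (auto simp: sig_add sig_smult[of _ _ 0 0, simplified])

lemma comm_poly:
  fixes L :: "nat \<Rightarrow> complex"
  assumes L1: "(1 + z^2) * L 1 = 2 * \<i>"
    and R: "\<And>j. j \<ge> 1 \<Longrightarrow> (1 + z^2) * L (j+1) + 2 * of_nat j * z * L j + of_nat j * (of_nat j - 1) * L (j - 1) = 0"
  shows "sig \<alpha> z (Tz L \<rho>) - Tz L (sig \<alpha> z \<rho>) = smult (-2) \<rho>"
proof -
  define \<Phi> where "\<Phi> p = sig \<alpha> z (Tz L p) - Tz L (sig \<alpha> z p) - smult (-2) p" for p
  have mon: "\<Phi> (monom 1 n) = 0" for n
  proof -
    have T1: "Tz L (monom 1 m) = Tpoly L m" for m using Tz_monom[of L 1 m] by simp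
    have "Tz L (sig \<alpha> z (monom 1 n)) = smult (1/2) (smult (- 2 * of_nat n * (2 * of_nat n - 2 + \<alpha>)) (Tpoly L (n-1))
     + smult (- \<i> * z * (4 * of_nat n + \<alpha>)) (Tpoly L n) + smult (1 + z^2) (Tpoly L (n+1)))"
      unfolding sig_monom by (simp only: Tz_add Tz_smult T1)
    then have "\<Phi> (monom 1 n) = sig \<alpha> z (Tpoly L n) - smult (1/2) (smult (- 2 * of_nat n * (2 * of_nat n - 2 + \<alpha>)) (Tpoly L (n-1))
     + smult (- \<i> * z * (4 * of_nat n + \<alpha>)) (Tpoly L n) + smult (1 + z^2) (Tpoly L (n+1))) - smult (-2) (monom 1 n)"
      unfolding \<Phi>_def T1 by simp
    also have "\<dots> = 0"
    proof (rule poly_eqI)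
      fix e
      have "csig \<alpha> z (tc L n) e
     - (1/2) * (- 2 * of_nat n * (2 * of_nat n - 2 + \<alpha>) * tc L (n-1) e
          - \<i> * z * (4 * of_nat n + \<alpha>) * tc L n e + (1 + z^2) * tc L (n+1) e)
     = (if e = n then -2 else 0)" by (rule comm_coeff[OF L1 R])
      then have F: "csig \<alpha> z (tc L n) e = (if e = n then -2 else 0) + (1/2) * (- 2 * of_nat n * (2 * of_nat n - 2 + \<alpha>) * tc L (n-1) e
          - \<i> * z * (4 * of_nat n + \<alpha>) * tc L n e + (1 + z^2) * tc L (n+1) e)"
        by (simp only: diff_eq_eq)
      show "coeff (sig \<alpha> z (Tpoly L n) - smult (1/2) (smult (- 2 * of_nat n * (2 * of_nat n - 2 + \<alpha>)) (Tpoly L (n-1))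
     + smult (- \<i> * z * (4 * of_nat n + \<alpha>)) (Tpoly L n) + smult (1 + z^2) (Tpoly L (n+1))) - smult (-2) (monom 1 n)) e = coeff 0 e"
        (is "coeff ?B e = _")
      proof -
        have "coeff ?B e = csig \<alpha> z (tc L n) e - (1/2) * ((- 2 * of_nat n * (2 * of_nat n - 2 + \<alpha>)) * tc L (n-1) e
          + (- \<i> * z * (4 * of_nat n + \<alpha>)) * tc L n e + (1 + z^2) * tc L (n+1) e) - (-2) * (if n = e then 1 else 0)"
          by (simp only: coeff_diff coeff_add coeff_smult coeff_sig coeff_Tpoly_fun coeff_Tpoly coeff_monom)
        also have "\<dots> = 0" unfolding F by (cases "e = n") (simp_all add: algebra_simps)
        finally show ?thesis by simp
      qed
    qed
    finally show ?thesis .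
  qed
  have lin: "\<Phi> (\<Sum>i\<in>S. smult (c i) (monom 1 i)) = 0" for S c
  proof -
    have "\<Phi> (\<Sum>i\<in>S. smult (c i) (monom 1 i)) = (\<Sum>i\<in>S. smult (c i) (\<Phi> (monom 1 i)))"
      unfolding \<Phi>_def by (simp add: Tz_sum sig_sum Tz_smult sig_smult smult_diff_right smult_add_right sum.distrib sum_subtractf sum_negf mult.commute smult_sum_r)
    then show ?thesis using mon by simp
  qed
  have "\<rho> = (\<Sum>i\<le>degree \<rho>. smult (coeff \<rho> i) (monom 1 i))"
    by (simp add: smult_monom poly_as_sum_of_monoms)
  then have "\<Phi> \<rho> = 0" using lin by metis
  then show ?thesis unfolding \<Phi>_def by (simp only: eq_iff_diff_eq_0[symmetric])
qed

definition Ap :: "complex \<Rightarrow> complex poly \<Rightarrow> complex poly" where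
  "Ap z q = smult 2 (pderiv q) + smult (\<i>*z) q"
definition Bp :: "complex \<Rightarrow> complex poly \<Rightarrow> complex poly" where
  "Bp z q = q + smult 2 (pCons 0 (pderiv q)) + smult (\<i>*z) (pCons 0 q)"

lemma sig1: "smult (1/2) (pCons 0 p - Bp z (Ap z p)) = sig 1 z p"
  by (rule poly_eqI, rename_tac e, case_tac e)
     (simp_all add: sig_def Ap_def Bp_def coeff_pderiv pderiv_add pderiv_smult algebra_simps power2_eq_square)

lemma sig3: "smult (1/2) (pCons 0 p - Ap z (Bp z p)) = sig 3 z p"
  by (rule poly_eqI, rename_tac e, case_tac e)
     (simp_all add: sig_def Ap_def Bp_def coeff_pderiv pderiv_add pderiv_smult pderiv_pCons algebra_simps power2_eq_square)

definition ex :: "complex \<Rightarrow> complex \<Rightarrow> complex" where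
  "ex z w = exp (\<i> * z * w^2 / 2)"

lemma d_ex: "(ex z has_field_derivative (\<i> * z * w * ex z w)) (at w)"
  unfolding ex_def by (auto intro!: derivative_eq_intros simp: power2_eq_square algebra_simps)

lemma d_polysq: "((\<lambda>w. poly q (w^2)) has_field_derivative (poly (pderiv q) (w^2) * (2 * w))) (at w)"
  by (auto intro!: derivative_eq_intros DERIV_chain2[OF poly_DERIV] simp: power2_eq_square)

lemma d1: "((\<lambda>w. poly q (w^2) * ex z w) has_field_derivative (poly (Ap z q) (w^2) * w * ex z w)) (at w)"
  by (rule DERIV_cong[OF DERIV_mult[OF d_polysq d_ex]]) (simp add: Ap_def algebra_simps)

lemma d2: "((\<lambda>w. poly q (w^2) * w * ex z w) has_field_derivative (poly (Bp z q) (w^2) * ex z w)) (at w)"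
  by (rule DERIV_cong[OF DERIV_mult[OF DERIV_mult[OF d_polysq DERIV_ident] d_ex]])
     (simp add: Bp_def algebra_simps power2_eq_square)


definition mapP :: "(complex \<Rightarrow> complex poly \<Rightarrow> complex poly) \<Rightarrow> (complex \<times> complex poly \<times> complex) list \<Rightarrow> (complex \<times> complex poly \<times> complex) list" where
  "mapP F r = map (\<lambda>(c, \<rho>, z). (c, F z \<rho>, z)) r"

definition E0 :: "(complex \<times> complex poly \<times> complex) list \<Rightarrow> complex \<Rightarrow> complex" where
  "E0 r w = (\<Sum>(c, \<rho>, z) \<leftarrow> r. c * poly \<rho> (w^2) * ex z w)"

definition E1 :: "(complex \<times> complex poly \<times> complex) list \<Rightarrow> complex \<Rightarrow> complex" where
  "E1 r w = (\<Sum>(c, \<rho>, z) \<leftarrow> r. c * poly \<rho> (w^2) * w * ex z w)"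

lemma mapP_simps [simp]: "mapP F [] = []" "mapP F ((c, \<rho>, z) # r) = (c, F z \<rho>, z) # mapP F r"
  by (simp_all add: mapP_def)

lemma E0_simps [simp]: "E0 [] w = 0" "E0 ((c, \<rho>, z) # r) w = c * poly \<rho> (w^2) * ex z w + E0 r w"
  by (simp_all add: E0_def)

lemma E1_simps [simp]: "E1 [] w = 0" "E1 ((c, \<rho>, z) # r) w = c * poly \<rho> (w^2) * w * ex z w + E1 r w"
  by (simp_all add: E1_def)

lemma eval0_E0: "eval0 r x = E0 r (of_real x)"
  by (induct r) (auto simp: eval0_def xi_def ex_def)

lemma eval1_E1: "eval1 r x = E1 r (of_real x)"
  by (induct r) (auto simp: eval1_def xi_def ex_def)

lemma DE0: "(E0 r has_field_derivative E1 (mapP Ap r) w) (at w)"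
proof (induct r)
  case Nil then show ?case by simp
next
  case (Cons a r)
  obtain c \<rho> z where a: "a = (c, \<rho>, z)" by (cases a) auto
  have "((\<lambda>w. c * (poly \<rho> (w^2) * ex z w) + E0 r w) has_field_derivative
         c * (poly (Ap z \<rho>) (w^2) * w * ex z w) + E1 (mapP Ap r) w) (at w)"
    by (rule DERIV_add[OF DERIV_cmult[OF d1] Cons])
  then show ?case by (simp add: a mult.assoc)
qed

lemma DE1: "(E1 r has_field_derivative E0 (mapP Bp r) w) (at w)"
proof (induct r)
  case Nil then show ?case by simp
next
  case (Cons a r)
  obtain c \<rho> z where a: "a = (c, \<rho>, z)" by (cases a) auto
  have "((\<lambda>w. c * (poly \<rho> (w^2) * w * ex z w) + E1 r w) has_field_derivative
         c * (poly (Bp z \<rho>) (w^2) * ex z w) + E0 (mapP Bp r) w) (at w)"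
    by (rule DERIV_add[OF DERIV_cmult[OF d2] Cons])
  then show ?case by (simp add: a mult.assoc)
qed

lemma hop_gen:
  assumes "\<And>w. (G has_field_derivative G1 w) (at w)" "\<And>w. (G1 has_field_derivative G2 w) (at w)"
  shows "hop (\<lambda>x. G (of_real x)) x = (1/2) * (- G2 (of_real x) + of_real (x^2) * G (of_real x))"
proof -
  have v1: "vector_derivative (\<lambda>x. G (of_real x)) (at y) = G1 (of_real y)" for y
    by (rule vector_derivative_at[OF has_vector_derivative_real_field[OF assms(1)]])
  have v2: "vector_derivative (\<lambda>y. G1 (of_real y)) (at x) = G2 (of_real x)"
    by (rule vector_derivative_at[OF has_vector_derivative_real_field[OF assms(2)]])
  show ?thesis unfolding hop_def v1 v2 by simp
qed

lemma hop_eval0: "hop (eval0 r) x = eval0 (mapP (sig 1) r) x"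
proof -
  have "hop (eval0 r) x = hop (\<lambda>x. E0 r (of_real x)) x" by (simp add: eval0_E0[abs_def])
  also have "\<dots> = (1/2) * (- E0 (mapP Bp (mapP Ap r)) (of_real x) + of_real (x^2) * E0 r (of_real x))"
    by (rule hop_gen[OF DE0 DE1])
  also have "\<dots> = E0 (mapP (sig 1) r) (of_real x)"
  proof (induct r)
    case Nil then show ?case by simp
  next
    case (Cons a r)
    obtain c \<rho> z where a: "a = (c, \<rho>, z)" by (cases a) auto
    show ?case using Cons by (simp add: a sig1[symmetric] algebra_simps add_divide_distrib)
  qed
  finally show ?thesis by (simp add: eval0_E0)
qed

lemma hop_eval1: "hop (eval1 r) x = eval1 (mapP (sig 3) r) x"
proof -
  have "hop (eval1 r) x = hop (\<lambda>x. E1 r (of_real x)) x" by (simp add: eval1_E1[abs_def])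
  also have "\<dots> = (1/2) * (- E1 (mapP Ap (mapP Bp r)) (of_real x) + of_real (x^2) * E1 r (of_real x))"
    by (rule hop_gen[OF DE1 DE0])
  also have "\<dots> = E1 (mapP (sig 3) r) (of_real x)"
  proof (induct r)
    case Nil then show ?case by simp
  next
    case (Cons a r)
    obtain c \<rho> z where a: "a = (c, \<rho>, z)" by (cases a) auto
    show ?case using Cons by (simp add: a sig3[symmetric] algebra_simps add_divide_distrib)
  qed
  finally show ?thesis by (simp add: eval1_E1)
qed

definition mu :: "complex poly \<Rightarrow> nat" where "mu p = (if p = 0 then 0 else Suc (degree p))"

lemma pderiv_smult_ne:
  fixes p :: "complex poly"
  assumes "c \<noteq> 0" "p \<noteq> 0" shows "pderiv p + smult c p \<noteq> 0"
proof
  assume h: "pderiv p + smult c p = 0"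
  have "coeff (pderiv p + smult c p) (degree p) = c * lead_coeff p"
    by (simp add: coeff_pderiv coeff_eq_0)
  then show False using h assms by simp
qed

lemma LI_aux:
  fixes Q :: "complex \<Rightarrow> complex poly"
  assumes "finite A" "\<And>w. (\<Sum>a\<in>A. poly (Q a) w * exp (a * w)) = 0"
  shows "\<forall>a0\<in>A. Q a0 = 0"
  using assms(2)
proof (induct "\<Sum>a\<in>A. mu (Q a)" arbitrary: Q rule: less_induct)
  case less
  show ?case
  proof (rule ccontr)
    assume "\<not> (\<forall>a0\<in>A. Q a0 = 0)"
    then obtain a0 where a0: "a0 \<in> A" "Q a0 \<noteq> 0" by auto
    define Q' where "Q' a = pderiv (Q a) + smult (a - a0) (Q a)" for a
    have F0: "(\<Sum>a\<in>A. poly (Q a) w * exp (a * w)) = 0" for w by (rule less.prems)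
    have dF: "((\<lambda>w. \<Sum>a\<in>A. poly (Q a) w * exp (a * w)) has_field_derivative
        (\<Sum>a\<in>A. poly (pderiv (Q a)) w * exp (a * w) + poly (Q a) w * (a * exp (a * w)))) (at w)" for w
      by (rule DERIV_sum) (auto intro!: derivative_eq_intros poly_DERIV simp: algebra_simps)
    have d0: "(\<Sum>a\<in>A. poly (pderiv (Q a)) w * exp (a * w) + poly (Q a) w * (a * exp (a * w))) = 0" for w
    proof -
      have "((\<lambda>w. \<Sum>a\<in>A. poly (Q a) w * exp (a * w)) has_field_derivative 0) (at w)"
        unfolding F0 by simp
      then show ?thesis using DERIV_unique dF by blast
    qed
    have new: "(\<Sum>a\<in>A. poly (Q' a) w * exp (a * w)) = 0" for w
    proof -
      have "(\<Sum>a\<in>A. poly (Q' a) w * exp (a * w)) =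
        (\<Sum>a\<in>A. poly (pderiv (Q a)) w * exp (a * w) + poly (Q a) w * (a * exp (a * w)))
          - a0 * (\<Sum>a\<in>A. poly (Q a) w * exp (a * w))"
        unfolding Q'_def sum_distrib_left sum_subtractf[symmetric]
        by (rule sum.cong) (auto simp: algebra_simps)
      then show ?thesis using d0 F0 by simp
    qed
    have le: "mu (Q' a) \<le> mu (Q a)" if "a \<in> A" for a
    proof (cases "Q a = 0")
      case True then show ?thesis by (simp add: Q'_def mu_def)
    next
      case False
      have "degree (Q' a) \<le> degree (Q a)"
        unfolding Q'_def by (rule degree_add_le) (auto simp: degree_pderiv degree_smult_le intro: order.trans[OF degree_smult_le])
      then show ?thesis using False by (simp add: mu_def)
    qed
    have lt: "mu (Q' a0) < mu (Q a0)"
    proof -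
      have "Q' a0 = pderiv (Q a0)" by (simp add: Q'_def)
      moreover have "mu (pderiv (Q a0)) < mu (Q a0)"
      proof (cases "pderiv (Q a0) = 0")
        case True then show ?thesis using a0 by (simp add: mu_def)
      next
        case False
        then have "degree (Q a0) \<noteq> 0" using pderiv_eq_0_iff[of "Q a0"] by auto
        then show ?thesis using False a0 by (simp add: mu_def degree_pderiv)
      qed
      ultimately show ?thesis by simp
    qed
    have "(\<Sum>a\<in>A. mu (Q' a)) < (\<Sum>a\<in>A. mu (Q a))"
      by (rule sum_strict_mono_ex1) (use assms(1) le lt a0 in auto)
    then have all0: "\<forall>a\<in>A. Q' a = 0" using less.hyps new by blast
    have oth: "Q a = 0" if "a \<in> A" "a \<noteq> a0" for a
    proof (rule ccontr)
      assume "Q a \<noteq> 0"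
      then have "Q' a \<noteq> 0" unfolding Q'_def by (rule pderiv_smult_ne[rotated]) (use that in auto)
      then show False using all0 that by auto
    qed
    have "poly (Q a0) w = 0" for w
    proof -
      have "(\<Sum>a\<in>A. poly (Q a) w * exp (a * w)) = poly (Q a0) w * exp (a0 * w) + (\<Sum>a\<in>A-{a0}. poly (Q a) w * exp (a * w))"
        by (rule sum.remove[OF assms(1) a0(1)])
      also have "(\<Sum>a\<in>A-{a0}. poly (Q a) w * exp (a * w)) = 0"
        by (rule sum.neutral) (use oth in auto)
      finally have "(\<Sum>a\<in>A. poly (Q a) w * exp (a * w)) = poly (Q a0) w * exp (a0 * w)" by simp
      then show ?thesis using F0[of w] by simp
    qed
    then have "Q a0 = 0" using poly_all_0_iff_0 by blast
    then show False using a0 by simp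
  qed
qed


lemma LI_real:
  fixes Q :: "complex \<Rightarrow> complex poly"
  assumes fin: "finite Z"
    and h: "\<And>x::real. x > 0 \<Longrightarrow> (\<Sum>z\<in>Z. poly (Q z) (of_real (x^2)) * xi z x) = 0"
  shows "\<forall>z\<in>Z. Q z = 0"
proof -
  define a where "a z = \<i> * z / 2" for z :: complex
  have inj: "inj_on a Z" unfolding a_def by (rule inj_onI) simp
  define Qa where "Qa b = Q (-2 * \<i> * b)" for b
  have Qa_a: "Qa (a z) = Q z" for z unfolding Qa_def a_def by (simp add: algebra_simps)
  define F where "F w = (\<Sum>b\<in>a ` Z. poly (Qa b) w * exp (b * w))" for w
  have F_eq: "F w = (\<Sum>z\<in>Z. poly (Q z) w * exp (a z * w))" for w
    unfolding F_def by (simp add: sum.reindex[OF inj] Qa_a)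
  have Fpos: "F w = 0" if w_in: "w \<in> complex_of_real ` {0<..}" for w
  proof -
    obtain t where t: "t > 0" "w = of_real t" using w_in by auto
    define x where "x = sqrt t"
    have x: "x > 0" "x^2 = t" using t unfolding x_def by auto
    have "F w = (\<Sum>z\<in>Z. poly (Q z) (of_real (x^2)) * xi z x)"
      unfolding F_eq t(2) x(2)[symmetric]
      by (rule sum.cong) (auto simp: xi_def a_def algebra_simps)
    then show ?thesis using h[OF x(1)] by simp
  qed
  have hol: "F holomorphic_on UNIV"
    unfolding F_def[abs_def] by (auto intro!: holomorphic_intros)
  have lim: "1 islimpt (complex_of_real ` {0<..})"
  proof (unfold islimpt_approachable, intro allI impI)
    fix e :: real assume e: "e > 0"
    show "\<exists>x'\<in>complex_of_real ` {0<..}. x' \<noteq> 1 \<and> dist x' 1 < e"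
    proof (intro bexI conjI)
      show "complex_of_real (1 + e/2) \<noteq> 1" using e by (simp add: complex_eq_iff)
      show "dist (complex_of_real (1 + e/2)) 1 < e" using e by (simp add: dist_norm)
      show "complex_of_real (1 + e/2) \<in> complex_of_real ` {0<..}" using e by (intro imageI) simp
    qed
  qed
  have Fall: "F w = 0" for w
    by (rule analytic_continuation[OF hol open_UNIV connected_UNIV subset_UNIV UNIV_I lim Fpos UNIV_I])
  have "\<forall>b\<in>a ` Z. Qa b = 0"
    by (rule LI_aux[OF finite_imageI[OF fin]]) (use Fall[unfolded F_def] in auto)
  then show ?thesis using Qa_a by auto
qed

definition Lz :: "complex \<Rightarrow> nat \<Rightarrow> complex" where "Lz z k = Lk k z"

lemma two_choose2: "2 * (j choose 2) = j * (j - 1)"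
proof (induct j)
  case 0 show ?case by simp
next
  case (Suc j)
  have "Suc j choose 2 = j + (j choose 2)" by (simp add: numeral_2_eq_2)
  then show ?case using Suc by (cases j) (auto simp: algebra_simps)
qed

lemma L_rel:
  assumes "adm z"
  shows "(1 + z^2) * Lz z 1 = 2 * \<i>"
    and "\<And>j. j \<ge> 1 \<Longrightarrow> (1 + z^2) * Lz z (j+1) + 2 * of_nat j * z * Lz z j + of_nat j * (of_nat j - 1) * Lz z (j - 1) = 0"
proof -
  have z: "z \<noteq> \<i>" "z \<noteq> - \<i>" using assms unfolding adm_def by auto
  have ffe: "(\<lambda>w. 2 * \<i> / (1 + w^2)) = ff" by (rule ext) (simp add: ff_def)
  have Lk_ff: "Lk k z = (deriv ^^ (k - 1)) ff z" if "k \<ge> 1" for k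
    using that by (simp add: Lk_def ffe)
  show "(1 + z^2) * Lz z 1 = 2 * \<i>"
    using ff_rel[OF z, of 0] by (simp add: Lz_def Lk_ff numeral_2_eq_2)
  fix j :: nat assume j: "j \<ge> 1"
  have r: "(1 + z^2) * (deriv ^^ j) ff z + of_nat j * (2*z) * (deriv ^^ (j - 1)) ff z
         + of_nat (j choose 2) * 2 * (deriv ^^ (j - 2)) ff z = 0"
    using ff_rel[OF z, of j] j by simp
  show "(1 + z^2) * Lz z (j+1) + 2 * of_nat j * z * Lz z j + of_nat j * (of_nat j - 1) * Lz z (j - 1) = 0"
  proof (cases "j = 1")
    case True
    then show ?thesis using r by (simp add: Lz_def Lk_ff numeral_2_eq_2)
  next
    case False
    then have j2: "j \<ge> 2" using j by auto
    have c: "of_nat (j choose 2) * 2 = (of_nat j * (of_nat j - 1) :: complex)"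
    proof -
      have "(of_nat (2 * (j choose 2)) :: complex) = of_nat (j * (j - 1))" by (simp only: two_choose2)
      then show ?thesis using j by (simp add: of_nat_diff mult.commute)
    qed
    have e1: "Lz z (j - 1) = (deriv ^^ (j - 2)) ff z" using j2 by (simp add: Lz_def Lk_ff numeral_2_eq_2)
    have e2: "Lz z j = (deriv ^^ (j - 1)) ff z" using j by (simp add: Lz_def Lk_ff)
    have e3: "Lz z (j+1) = (deriv ^^ j) ff z" by (simp add: Lz_def Lk_ff)
    show ?thesis unfolding e1 e2 e3 c[symmetric] using r by (simp add: algebra_simps)
  qed
qed

lemma tnL_poly: "tnL n x z = poly (Tpoly (Lz z) n) (of_real (x^2))"
  unfolding tnL_def Tpoly_def poly_sum poly_monom Lz_def
proof (rule sum.cong)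
  fix k assume "k \<in> {..n}"
  have "complex_of_real (x ^ (2 * (n - k))) = (complex_of_real (x^2)) ^ (n - k)"
    by (simp only: power_mult of_real_power)
  then show "of_nat (n choose k) * complex_of_real (x ^ (2 * (n - k))) * (- 2 * \<i>) ^ k * Lk k z =
    of_nat (n choose k) * (- 2 * \<i>) ^ k * Lk k z * complex_of_real (x^2) ^ (n - k)"
    by (simp only: mult_ac)
qed simp

lemma rhoL_poly: "rhoL \<rho> x z = poly (Tz (Lz z) \<rho>) (of_real (x^2))"
  unfolding rhoL_def Tz_def poly_sum poly_smult tnL_poly by simp

definition grp :: "(complex \<times> complex poly \<times> complex) list \<Rightarrow> complex \<Rightarrow> complex poly" where
  "grp r z = (\<Sum>(c, \<rho>, z') \<leftarrow> r. if z' = z then smult c \<rho> else 0)"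

definition zs :: "(complex \<times> complex poly \<times> complex) list \<Rightarrow> complex set" where
  "zs r = set (map (\<lambda>(c, \<rho>, z). z) r)"

lemma group:
  assumes fin: "finite Z" and sub: "zs r \<subseteq> Z"
    and Kadd: "\<And>z p q. K z (p + q) = K z p + K z q"
    and Ksm: "\<And>z c p. K z (smult c p) = smult c (K z p)"
  shows "(\<Sum>(c, \<rho>, z) \<leftarrow> r. c * poly (K z \<rho>) t * g z) = (\<Sum>z\<in>Z. poly (K z (grp r z)) t * g z)"
  using sub
proof (induct r)
  case Nil
  have "K z 0 = 0" for z using Ksm[of z 0 0] by simp
  then show ?case by (simp add: grp_def)
next
  case (Cons a r)
  obtain c \<rho> z0 where a: "a = (c, \<rho>, z0)" by (cases a) auto
  have z0: "z0 \<in> Z" and sr: "zs r \<subseteq> Z" using Cons.prems by (auto simp: zs_def a)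
  have K0: "K z 0 = 0" for z using Ksm[of z 0 0] by simp
  have g: "grp (a # r) z = (if z0 = z then smult c \<rho> else 0) + grp r z" for z
    by (simp add: grp_def a)
  have "(\<Sum>z\<in>Z. poly (K z (grp (a # r) z)) t * g z)
      = (\<Sum>z\<in>Z. (if z0 = z then c * poly (K z \<rho>) t * g z else 0)) + (\<Sum>z\<in>Z. poly (K z (grp r z)) t * g z)"
    unfolding g Kadd sum.distrib[symmetric]
    by (rule sum.cong) (auto simp: K0 Ksm algebra_simps)
  also have "\<dots> = c * poly (K z0 \<rho>) t * g z0 + (\<Sum>z\<in>Z. poly (K z (grp r z)) t * g z)"
    using z0 fin by (simp add: sum.delta)
  finally show ?case using Cons.hyps[OF sr] by (simp add: a)
qed


lemma Tz_lin: "Tz L (p + q) = Tz L p + Tz L q" "Tz L (smult c p) = smult c (Tz L p)"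
  by (rule Tz_add, rule Tz_smult)

lemma eval0_grp: "finite Z \<Longrightarrow> zs r \<subseteq> Z \<Longrightarrow>
   eval0 r x = (\<Sum>z\<in>Z. poly (grp r z) (of_real (x^2)) * xi z x)"
  unfolding eval0_def using group[of Z r "\<lambda>z p. p" "of_real (x^2)" "\<lambda>z. xi z x"] by simp

lemma Seval0_list: "Seval0 r x = (\<Sum>(c, \<rho>, z) \<leftarrow> r. c * poly (Tz (Lz z) \<rho>) (of_real (x^2)) * (\<i> / 2 * xi z x))"
  by (induct r) (auto simp: Seval0_def rhoL_poly algebra_simps)

lemma Seval1_list: "Seval1 r x = (\<Sum>(c, \<rho>, z) \<leftarrow> r. c * poly (Tz (Lz z) \<rho>) (of_real (x^2)) * (\<i> / 2 * of_real x * xi z x))"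
  by (induct r) (auto simp: Seval1_def rhoL_poly algebra_simps)

lemma Seval0_grp: "finite Z \<Longrightarrow> zs r \<subseteq> Z \<Longrightarrow>
   Seval0 r x = (\<Sum>z\<in>Z. poly (Tz (Lz z) (grp r z)) (of_real (x^2)) * (\<i> / 2 * xi z x))"
  unfolding Seval0_list by (rule group) (auto simp: Tz_lin)

lemma Seval1_grp: "finite Z \<Longrightarrow> zs r \<subseteq> Z \<Longrightarrow>
   Seval1 r x = (\<Sum>z\<in>Z. poly (Tz (Lz z) (grp r z)) (of_real (x^2)) * (\<i> / 2 * of_real x * xi z x))"
  unfolding Seval1_list by (rule group) (auto simp: Tz_lin)

lemma finite_zs: "finite (zs r)" by (simp add: zs_def)

lemma uniq:
  assumes h: "\<And>x::real. x > 0 \<Longrightarrow> eval0 r x = eval0 r' x"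
  shows "Seval0 r = Seval0 r'" "Seval1 r = Seval1 r'"
proof -
  define Z where "Z = zs r \<union> zs r'"
  have fin: "finite Z" unfolding Z_def by (simp add: finite_zs)
  have s1: "zs r \<subseteq> Z" "zs r' \<subseteq> Z" unfolding Z_def by auto
  have "\<forall>z\<in>Z. grp r z - grp r' z = 0"
  proof (rule LI_real[OF fin])
    fix x :: real assume x: "x > 0"
    have "(\<Sum>z\<in>Z. poly (grp r z - grp r' z) (of_real (x^2)) * xi z x) = eval0 r x - eval0 r' x"
      unfolding eval0_grp[OF fin s1(1)] eval0_grp[OF fin s1(2)] sum_subtractf[symmetric]
      by (rule sum.cong) (auto simp: algebra_simps)
    then show "(\<Sum>z\<in>Z. poly (grp r z - grp r' z) (of_real (x^2)) * xi z x) = 0" using h[OF x] by simp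
  qed
  then have eq: "\<And>z. z \<in> Z \<Longrightarrow> grp r z = grp r' z" by auto
  show "Seval0 r = Seval0 r'"
    by (rule ext) (simp only: Seval0_grp[OF fin s1(1)] Seval0_grp[OF fin s1(2)] eq cong: sum.cong)
  show "Seval1 r = Seval1 r'"
    by (rule ext) (simp only: Seval1_grp[OF fin s1(1)] Seval1_grp[OF fin s1(2)] eq cong: sum.cong)
qed

lemma eval1_eval0: "eval1 r x = of_real x * eval0 r x"
  by (induct r) (auto simp: eval0_def eval1_def algebra_simps)

lemma Shat_eq: "valid_rep r \<Longrightarrow> Shat (eval0 r) = Seval0 r"
  unfolding Shat_def
proof (rule the_equality)
  assume "valid_rep r"
  then show "\<exists>r'. valid_rep r' \<and> eval0 r = eval0 r' \<and> Seval0 r = Seval0 r'" by blast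
next
  fix g assume "\<exists>r'. valid_rep r' \<and> eval0 r = eval0 r' \<and> g = Seval0 r'"
  then obtain r' where "eval0 r = eval0 r'" "g = Seval0 r'" by blast
  then show "g = Seval0 r" using uniq(1)[of r' r] by metis
qed

lemma Shat_star_eq: "valid_rep r \<Longrightarrow> Shat_star (eval1 r) = Seval1 r"
  unfolding Shat_star_def
proof (rule the_equality)
  assume "valid_rep r"
  then show "\<exists>r'. valid_rep r' \<and> eval1 r = eval1 r' \<and> Seval1 r = Seval1 r'" by blast
next
  fix g assume "\<exists>r'. valid_rep r' \<and> eval1 r = eval1 r' \<and> g = Seval1 r'"
  then obtain r' where e: "eval1 r = eval1 r'" and g: "g = Seval1 r'" by blast
  have "eval0 r' x = eval0 r x" if "x > 0" for x :: real
  proof -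
    have "of_real x * eval0 r' x = of_real x * eval0 r x"
      using fun_cong[OF e, of x] by (auto simp: eval1_eval0)
    then show ?thesis using that by auto
  qed
  then show "g = Seval1 r" using uniq(2)[of r' r] g by metis
qed

definition mapT :: "(complex \<times> complex poly \<times> complex) list \<Rightarrow> (complex \<times> complex poly \<times> complex) list" where
  "mapT r = map (\<lambda>(c, \<rho>, z). (c * (\<i> / 2), Tz (Lz z) \<rho>, z)) r"

lemma Seval0_mapT: "Seval0 r = eval0 (mapT r)"
  by (rule ext, induct r) (auto simp: Seval0_def eval0_def mapT_def rhoL_poly xi_def algebra_simps)

lemma Seval1_mapT: "Seval1 r = eval1 (mapT r)"
  by (rule ext, induct r) (auto simp: Seval1_def eval1_def mapT_def rhoL_poly xi_def algebra_simps)

lemma valid_mapP: "valid_rep r \<Longrightarrow> valid_rep (mapP F r)"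
  by (auto simp: valid_rep_def mapP_def)

lemma eval0_Cons: "eval0 ((c, \<rho>, z) # r) x = c * poly \<rho> (of_real (x^2)) * xi z x + eval0 r x"
  by (simp add: eval0_def)

lemma eval0_Nil: "eval0 [] x = 0"
  by (simp add: eval0_def)

lemma mapT_Cons: "mapT ((c, \<rho>, z) # r) = (c * (\<i> / 2), Tz (Lz z) \<rho>, z) # mapT r" "mapT [] = []"
  by (simp_all add: mapT_def)

lemma final0:
  "valid_rep r \<Longrightarrow> eval0 (mapP (sig \<alpha>) (mapT r)) x - eval0 (mapT (mapP (sig \<alpha>) r)) x = - \<i> * eval0 r x"
proof (induct r)
  case Nil then show ?case by (simp add: eval0_Nil mapT_Cons)
next
  case (Cons a r)
  obtain c \<rho> z where a: "a = (c, \<rho>, z)" by (cases a) auto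
  have adm: "adm z" and vr: "valid_rep r" using Cons.prems by (auto simp: valid_rep_def a)
  have cp: "sig \<alpha> z (Tz (Lz z) \<rho>) = Tz (Lz z) (sig \<alpha> z \<rho>) + smult (-2) \<rho>"
    using comm_poly[OF L_rel[OF adm]] by (simp add: algebra_simps)
  have "eval0 (mapP (sig \<alpha>) (mapT (a # r))) x - eval0 (mapT (mapP (sig \<alpha>) (a # r))) x
     = (c * (\<i> / 2) * poly (sig \<alpha> z (Tz (Lz z) \<rho>)) (of_real (x^2)) * xi z x
         - c * (\<i> / 2) * poly (Tz (Lz z) (sig \<alpha> z \<rho>)) (of_real (x^2)) * xi z x)
       + (eval0 (mapP (sig \<alpha>) (mapT r)) x - eval0 (mapT (mapP (sig \<alpha>) r)) x)"
    by (simp add: a mapT_Cons eval0_Cons)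
  also have "\<dots> = - \<i> * (c * poly \<rho> (of_real (x^2)) * xi z x) + - \<i> * eval0 r x"
    unfolding Cons.hyps[OF vr] cp by (simp add: algebra_simps)
  also have "\<dots> = - \<i> * eval0 (a # r) x" by (simp add: a eval0_Cons algebra_simps)
  finally show ?case .
qed

lemma final1:
  "valid_rep r \<Longrightarrow> eval1 (mapP (sig \<alpha>) (mapT r)) x - eval1 (mapT (mapP (sig \<alpha>) r)) x = - \<i> * eval1 r x"
  by (simp only: eval1_eval0 right_diff_distrib[symmetric] final0) (simp add: algebra_simps)

theorem lemma4p6:
  shows "(\<forall>f \<in> N0. (\<lambda>x. hop (Shat f) x - Shat (hop f) x) = (\<lambda>x. - \<i> * f x))
       \<and> (\<forall>f \<in> N1. (\<lambda>x. hop (Shat_star f) x - Shat_star (hop f) x) = (\<lambda>x. - \<i> * f x))"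
proof (intro conjI ballI ext)
  fix f x assume "f \<in> N0"
  then obtain r where r: "valid_rep r" "f = eval0 r" unfolding N0_def by blast
  have hf: "hop f = eval0 (mapP (sig 1) r)" unfolding r(2) by (rule ext) (rule hop_eval0)
  have "hop (Shat f) x = eval0 (mapP (sig 1) (mapT r)) x"
    unfolding r(2) Shat_eq[OF r(1)] Seval0_mapT by (rule hop_eval0)
  moreover have "Shat (hop f) x = eval0 (mapT (mapP (sig 1) r)) x"
    unfolding hf Shat_eq[OF valid_mapP[OF r(1)]] Seval0_mapT ..
  ultimately show "hop (Shat f) x - Shat (hop f) x = - \<i> * f x"
    using final0[OF r(1)] r(2) by simp
next
  fix f x assume "f \<in> N1"
  then obtain r where r: "valid_rep r" "f = eval1 r" unfolding N1_def by blast
  have hf: "hop f = eval1 (mapP (sig 3) r)" unfolding r(2) by (rule ext) (rule hop_eval1)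
  have "hop (Shat_star f) x = eval1 (mapP (sig 3) (mapT r)) x"
    unfolding r(2) Shat_star_eq[OF r(1)] Seval1_mapT by (rule hop_eval1)
  moreover have "Shat_star (hop f) x = eval1 (mapT (mapP (sig 3) r)) x"
    unfolding hf Shat_star_eq[OF valid_mapP[OF r(1)]] Seval1_mapT ..
  ultimately show "hop (Shat_star f) x - Shat_star (hop f) x = - \<i> * f x"
    using final1[OF r(1)] r(2) by simp
qed

end
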